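(* Define $V:C\times A\times\Delta\big(S\times\Delta_\nu(C\times A)\big)\to\mathbb{R}$ by $V(c,a,\kappa)=\int v(c,a,s,\mu)\,\mathrm d\kappa(s,\mu)$. Then $V$ is supermodular in $a$ (i.e. $V(c,a\vee a',\kappa)+V(c,a\wedge a',\kappa)\ge V(c,a,\kappa)+V(c,a',\kappa)$), and $V$ has increasing differences in $(a,\kappa)$: whenever $a\succeq a'$ and $\kappa\succeq\lambda$ in $\Delta(S\times\Delta_\nu(C\times A))$, $V(c,a,\kappa)-V(c,a',\kappa)\ge V(c,a,\lambda)-V(c,a',\lambda)$.
   Context: Conventions: $\Delta(X)$ = Borel probability measures on a Polish space $X$ with the weak topology; $\Delta_\nu(X\times Y)$ = those on $X\times Y$ with $X$-marginal $\nu$. Setting: $C$ Polish with Borel probability $\nu$; $A$ compact metrizable with a lattice order $\succeq$ whose join $\vee$ and meet $\wedge$ are continuous; $S$ compact metrizable; $v:C\times A\times S\times\Delta_\nu(C\times A)\to\mathbb{R}$ continuous, supermodular in $a$ ($v(c,a\vee a',s,\mu)+v(c,a\wedge a',s,\mu)\ge v(c,a,s,\mu)+v(c,a',s,\mu)$) and with increasing differences in $(a,\mu)$ (for $a\succeq a'$, $\mu\mapsto v(c,a,s,\mu)-v(c,a',s,\mu)$ is nondecreasing in the stochastic order on $\Delta_\nu(C\times A)$). Stochastic orders: for a Polish space $X$ with a closed partial order $\succeq$, $\mu\succeq\mu'$ in $\Delta(X)$ iff $\int g\,\mathrm d\mu\ge\int g\,\mathrm d\mu'$ for every bounded measurable $\succeq$-nondecreasing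 $g$. On $C\times A$ use $(c,a)\succeq(c',a')$ iff $c=c'$ and $a\succeq a'$, giving the order on $\Delta_\nu(C\times A)$; on $S\times\Delta_\nu(C\times A)$ use $(s,\mu)\succeq(s',\mu')$ iff $s=s'$ and $\mu\succeq\mu'$, giving the stochastic order on $\Delta(S\times\Delta_\nu(C\times A))$. *)

theory Defs
  imports "HOL-Probability.Probability"
begin

definition borel_of :: "'x topology \<Rightarrow> 'x measure" where
  "borel_of X = sigma (topspace X) {U. openin X U}"

definition prob_measures :: "'x measure \<Rightarrow> 'x measure set" where
  "prob_measures M = {\<mu>. prob_space \<mu> \<and> sets \<mu> = sets M}"

definition Delta_nu :: "'c::topological_space measure \<Rightarrow> ('c \<times> 'b::topological_space) measure set" where
  "Delta_nu \<nu> = {\<mu> \<in> prob_measures (borel :: ('c \<times> 'b) measure). distr \<mu> borel fst = \<nu>}"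

definition weak_topology :: "'x::topological_space measure set \<Rightarrow> 'x measure topology" where
  "weak_topology P = topology_generated_by
     {{\<mu> \<in> P. (\<integral>x. g x \<partial>\<mu>) \<in> U} | g U.
        continuous_on UNIV g \<and> bounded (range g) \<and> open (U :: real set)}"

text \<open>Stochastic order: mu is stochastically larger than mu' w.r.t. the order R
  (R x y means x is above y) on the measurable space M.\<close>
definition stoch_ge :: "'x measure \<Rightarrow> ('x \<Rightarrow> 'x \<Rightarrow> bool) \<Rightarrow> 'x measure \<Rightarrow> 'x measure \<Rightarrow> bool" where
  "stoch_ge M R \<mu> \<mu>' \<longleftrightarrow>
     (\<forall>g :: 'x \<Rightarrow> real. g \<in> borel_measurable M \<longrightarrow>
        bounded (g ` space M) \<and> (\<forall>x\<in>space M. \<forall>y\<in>space M. R x y \<longrightarrow> g y \<le> g x)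
        \<longrightarrow> (\<integral>x. g x \<partial>\<mu>') \<le> (\<integral>x. g x \<partial>\<mu>))"

definition ca_ge :: "('c \<times> 'a::order) \<Rightarrow> ('c \<times> 'a) \<Rightarrow> bool" where
  "ca_ge p q \<longleftrightarrow> fst p = fst q \<and> snd q \<le> snd p"

definition sm_ge :: "('s \<times> ('c::topological_space \<times> 'a::{order,topological_space}) measure)
                     \<Rightarrow> ('s \<times> ('c \<times> 'a) measure) \<Rightarrow> bool" where
  "sm_ge p q \<longleftrightarrow> fst p = fst q \<and> stoch_ge borel ca_ge (snd p) (snd q)"

definition WT :: "'c::topological_space measure \<Rightarrow> ('c \<times> 'b::topological_space) measure topology" where
  "WT \<nu> = weak_topology (Delta_nu \<nu>)"

definition MS :: "'c::topological_space measure \<Rightarrow> ('s::topological_space \<times> ('c \<times> 'b::topological_space) measure) measure" where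
  "MS \<nu> = borel_of (prod_topology euclidean (WT \<nu>))"

definition Vint :: "('c \<Rightarrow> 'a \<Rightarrow> 's \<Rightarrow> 'm \<Rightarrow> real) \<Rightarrow> 'c \<Rightarrow> 'a \<Rightarrow> ('s \<times> 'm) measure \<Rightarrow> real" where
  "Vint v c a \<kappa> = (\<integral>p. v c a (fst p) (snd p) \<partial>\<kappa>)"

end

theory Submission
  imports Defs "HOL-Library.Diagonal_Subsequence"
begin

lemma compact_countable_dense:
  fixes S :: "'x::metric_space set"
  assumes "compact S"
  shows "\<exists>D. countable D \<and> D \<subseteq> S \<and> (\<forall>x\<in>S. \<forall>e>0. \<exists>d\<in>D. dist x d < e)"
proof -
  have tb: "\<forall>\<epsilon>>0. \<exists>k. finite k \<and> k \<subseteq> S \<and> S \<subseteq> (\<Union>x\<in>k. ball x \<epsilon>)"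
    using seq_compact_imp_totally_bounded compact_imp_seq_compact assms by blast
  have "\<forall>n::nat. \<exists>k. finite k \<and> k \<subseteq> S \<and> S \<subseteq> (\<Union>x\<in>k. ball x (1 / Suc n))"
    using tb by simp
  then obtain k where k: "\<And>n. finite (k n) \<and> k n \<subseteq> S \<and> S \<subseteq> (\<Union>x\<in>k n. ball x (1 / Suc n))"
    by metis
  show ?thesis
  proof (intro exI conjI ballI allI impI)
    show "countable (\<Union>n. k n)" using k by (intro countable_UN) (auto intro: countable_finite)
    show "(\<Union>n. k n) \<subseteq> S" using k by auto
    fix x e assume x: "x \<in> S" and e: "(0::real) < e"
    obtain n where n: "inverse (real (Suc n)) < e" using reals_Archimedean e by blast
    from k x obtain c where c: "c \<in> k n" "x \<in> ball c (1 / Suc n)" by blast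
    have "dist x c < e" using c n by (simp add: dist_commute inverse_eq_divide)
    then show "\<exists>d\<in>\<Union>n. k n. dist x d < e" using c by blast
  qed
qed

lemma diagonal_convergent:
  fixes x :: "nat \<Rightarrow> nat \<Rightarrow> real"
  assumes bnd: "\<And>k n. \<bar>x k n\<bar> \<le> 1"
  shows "\<exists>d. strict_mono d \<and> (\<forall>k. convergent (\<lambda>n. x k (d n)))"
proof -
  let ?P = "\<lambda>k. \<lambda>s. convergent (\<lambda>n. x k (s n))"
  interpret nat: subseqs ?P
  proof (unfold convergent_def, unfold subseqs_def, auto)
    fix n :: nat and s :: "nat \<Rightarrow> nat" assume s: "strict_mono s"
    have "bounded {-1..1::real}"
      using bounded_closed_interval by auto
    moreover have "\<And>k. x n (s k) \<in> {-1..1}"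
      using bnd by (simp add: abs_le_iff minus_le_iff)
    ultimately have "\<exists>l s'. strict_mono s' \<and> ((\<lambda>k. x n (s k)) \<circ> s') \<longlonglongrightarrow> l"
      using compact_Icc compact_imp_seq_compact seq_compactE by metis
    thus "\<exists>s'. strict_mono (s'::nat\<Rightarrow>nat) \<and> (\<exists>l. (\<lambda>k. x n (s (s' k))) \<longlonglongrightarrow> l)"
      by (auto simp: comp_def)
  qed
  define d where "d = nat.diagseq"
  have subseq: "strict_mono d"
    unfolding d_def using nat.subseq_diagseq by auto
  have cnv: "?P n d" for n
  proof -
    have Pn_seqseq: "?P n (nat.seqseq (Suc n))"
      by (rule nat.seqseq_holds)
    have 1: "(\<lambda>k. x n ((nat.seqseq (Suc n) \<circ> (\<lambda>k. nat.fold_reduce (Suc n) k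
      (Suc n + k))) k)) = (\<lambda>k. x n (nat.seqseq (Suc n) k)) \<circ>
      (\<lambda>k. nat.fold_reduce (Suc n) k (Suc n + k))"
      by auto
    have 2: "?P n (d \<circ> ((+) (Suc n)))"
      unfolding d_def nat.diagseq_seqseq 1
      by (intro convergent_subseq_convergent Pn_seqseq nat.subseq_diagonal_rest)
    then obtain L where 3: "(\<lambda>na. x n (d (na + Suc n))) \<longlonglongrightarrow> L"
      by (auto simp: add.commute dest: convergentD)
    then have "(\<lambda>k. x n (d k)) \<longlonglongrightarrow> L"
      by (rule LIMSEQ_offset)
    then show ?thesis
      by (auto simp: convergent_def)
  qed
  show ?thesis using subseq cnv by blast
qed

lemma count_levels:
  fixes t :: real
  assumes "0 \<le> t" "t \<le> real N"
  shows "t - 1 \<le> real (card {i\<in>{1..N}. real i < t}) \<and> real (card {i\<in>{1..N}. real i < t}) \<le> t"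
proof (cases "t = 0")
  case True
  then show ?thesis by simp
next
  case False
  then have tpos: "t > 0" using assms by simp
  define m where "m = nat (\<lceil>t\<rceil> - 1)"
  have mm: "real m = real_of_int \<lceil>t\<rceil> - 1"
    using tpos unfolding m_def by (simp add: ceiling_le_zero not_le)
  have "{i\<in>{1..N}. real i < t} = {1..m}"
  proof safe
    fix i assume "i \<in> {1..N}" "real i < t"
    then have "int i < \<lceil>t\<rceil>" by (simp add: less_ceiling_iff)
    then show "i \<in> {1..m}" using \<open>i \<in> {1..N}\<close> unfolding m_def by auto
  next
    fix i assume i: "i \<in> {1..m}"
    then have "int i < \<lceil>t\<rceil>" unfolding m_def by auto
    then have "real i < t" by (simp add: less_ceiling_iff)
    moreover have "t \<le> real N" by fact
    ultimately show "i \<in> {1..N}" using i by auto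
    show "real i < t" by fact
  qed
  then have "card {i\<in>{1..N}. real i < t} = m" by simp
  then show ?thesis using mm ceiling_correct[of t] by linarith
qed

lemma metric_separation:
  fixes S T :: "'x::metric_space set"
  assumes "closed S" "closed T" "S \<inter> T = {}"
  obtains U V where "open U" "open V" "S \<subseteq> U" "T \<subseteq> V" "U \<inter> V = {}"
proof (cases "S = {} \<or> T = {}")
  case True
  then show ?thesis
  proof
    assume "S = {}" then show ?thesis using that[of "{}" UNIV] by auto
  next
    assume "T = {}" then show ?thesis using that[of UNIV "{}"] by auto
  qed
next
  case False
  then have ne: "S \<noteq> {}" "T \<noteq> {}" by auto
  define U where "U = {x. infdist x S < infdist x T}"
  define V where "V = {x. infdist x T < infdist x S}"
  have "open U" unfolding U_def
    by (intro open_Collect_less continuous_on_infdist continuous_on_id)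
  moreover have "open V" unfolding V_def
    by (intro open_Collect_less continuous_on_infdist continuous_on_id)
  moreover have "S \<subseteq> U"
  proof
    fix x assume "x \<in> S"
    then have "infdist x S = 0" using in_closed_iff_infdist_zero[OF assms(1) ne(1)] by simp
    moreover have "x \<notin> T" using \<open>x \<in> S\<close> assms(3) by auto
    then have "infdist x T \<noteq> 0" using in_closed_iff_infdist_zero[OF assms(2) ne(2)] by simp
    then have "infdist x T > 0" using infdist_nonneg[of x T] by linarith
    ultimately show "x \<in> U" unfolding U_def by simp
  qed
  moreover have "T \<subseteq> V"
  proof
    fix x assume "x \<in> T"
    then have "infdist x T = 0" using in_closed_iff_infdist_zero[OF assms(2) ne(2)] by simp
    moreover have "x \<notin> S" using \<open>x \<in> T\<close> assms(3) by auto
    then have "infdist x S \<noteq> 0" using in_closed_iff_infdist_zero[OF assms(1) ne(1)] by simp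
    then have "infdist x S > 0" using infdist_nonneg[of x S] by linarith
    ultimately show "x \<in> V" unfolding V_def by simp
  qed
  moreover have "U \<inter> V = {}" unfolding U_def V_def by auto
  ultimately show ?thesis using that by blast
qed

lemma integrable_bounded_borel:
  fixes g :: "'x::topological_space \<Rightarrow> real"
  assumes "prob_space P" "sets P = sets borel" "g \<in> borel_measurable borel" "\<And>x. \<bar>g x\<bar> \<le> B"
  shows "integrable P g"
proof -
  have "finite_measure P" using assms(1) by (simp add: prob_space_def)
  moreover have "measurable P borel = measurable borel (borel :: real measure)"
    by (rule measurable_cong_sets[OF assms(2) refl])
  then have "g \<in> borel_measurable P" using assms(3) by simp
  moreover have "AE x in P. norm (g x) \<le> B" using assms(4) by simp
  ultimately show ?thesis by (metis finite_measure.integrable_const_bound)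
qed

lemma integrable_indicator_prob:
  fixes G :: "'x::topological_space set"
  assumes "prob_space P" "sets P = sets borel" "G \<in> sets borel"
  shows "integrable P (indicator G :: 'x \<Rightarrow> real)"
  apply (rule integrable_real_indicator)
  using assms apply simp
  using assms finite_measure.emeasure_finite[of P G] apply (simp add: prob_space_def less_top[symmetric])
  done

lemma integral_levels:
  fixes G :: "nat \<Rightarrow> 'x::topological_space set" and c :: real
  assumes "prob_space P" "sets P = sets borel" "\<And>i. G i \<in> sets borel" "finite I"
  shows "(\<integral>x. (\<Sum>i\<in>I. indicator (G i) x) / c \<partial>P) = (\<Sum>i\<in>I. measure P (G i)) / c"
proof -
  have sp: "space P = UNIV" using assms(2) by (metis sets_eq_imp_space_eq space_borel)
  have "(\<integral>x. (\<Sum>i\<in>I. indicator (G i) x) / c \<partial>P) = (\<integral>x. (\<Sum>i\<in>I. indicator (G i) x) \<partial>P) / c"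
    by (rule integral_divide_zero)
  also have "(\<integral>x. (\<Sum>i\<in>I. indicator (G i) x :: real) \<partial>P) = (\<Sum>i\<in>I. (\<integral>x. indicator (G i) x \<partial>P))"
    by (rule Bochner_Integration.integral_sum) (rule integrable_indicator_prob[OF assms(1,2,3)])
  also have "\<dots> = (\<Sum>i\<in>I. measure P (G i))" by (simp add: sp)
  finally show ?thesis .
qed

locale prok =
  fixes M :: "nat \<Rightarrow> 'x::metric_space measure" and K :: "nat \<Rightarrow> 'x set"
  assumes prob: "\<And>n. prob_space (M n)"
    and sets_M: "\<And>n. sets (M n) = sets borel"
    and K_compact: "\<And>m. compact (K m)"
    and K_mono: "incseq K"
    and K_big: "\<And>m n. 1 - 1 / Suc m \<le> measure (M n) (K m)"
begin

lemma fm: "finite_measure (M n)"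
  using prob[of n] by (simp add: prob_space_def)

lemma meas_le1: "measure (M n) A \<le> 1"
  using prob_space.prob_le_1[OF prob] by blast

lemma borel_M[simp]: "A \<in> sets borel \<Longrightarrow> A \<in> sets (M n)"
  using sets_M by simp

definition D where "D m = (SOME D. countable D \<and> D \<subseteq> K m \<and> (\<forall>x\<in>K m. \<forall>e>0. \<exists>d\<in>D. dist x d < e))"

lemma D: "countable (D m)" "D m \<subseteq> K m" "\<And>x e. x\<in>K m \<Longrightarrow> e>0 \<Longrightarrow> \<exists>d\<in>D m. dist x d < e"
proof -
  have "\<exists>D. countable D \<and> D \<subseteq> K m \<and> (\<forall>x\<in>K m. \<forall>e>0. \<exists>d\<in>D. dist x d < e)"
    using compact_countable_dense K_compact by blast
  then have "countable (D m) \<and> D m \<subseteq> K m \<and> (\<forall>x\<in>K m. \<forall>e>0. \<exists>d\<in>D m. dist x d < e)"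
    unfolding D_def by (rule someI_ex)
  then show "countable (D m)" "D m \<subseteq> K m" "\<And>x e. x\<in>K m \<Longrightarrow> e>0 \<Longrightarrow> \<exists>d\<in>D m. dist x d < e"
    by auto
qed

definition E where "E = range K \<union> (\<Union>m. \<Union>d\<in>D m. \<Union>r\<in>\<rat>\<inter>{0<..}. {cball d r \<inter> K m})"

lemma countable_E: "countable E"
  unfolding E_def
  by (intro countable_Un countable_UN countable_image countable_Int1 countable_rat D) auto

lemma E_ball: "d \<in> D m \<Longrightarrow> r \<in> \<rat> \<Longrightarrow> r > 0 \<Longrightarrow> cball d r \<inter> K m \<in> E"
  unfolding E_def by blast

lemma E_K: "K m \<in> E" unfolding E_def by blast

lemma E_sub: "e \<in> E \<Longrightarrow> \<exists>m. e \<subseteq> K m"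
  unfolding E_def by blast

lemma E_compact: "e \<in> E \<Longrightarrow> compact e"
  unfolding E_def using K_compact by (auto intro!: closed_Int_compact)

definition HH where "HH = {\<Union>F | F. finite F \<and> F \<subseteq> E}"

lemma countable_HH: "countable HH"
proof -
  have "HH = Union ` {F. finite F \<and> F \<subseteq> E}" unfolding HH_def by auto
  then show ?thesis using countable_image[OF countable_Collect_finite_subset[OF countable_E]] by simp
qed

lemma empty_HH: "{} \<in> HH" unfolding HH_def by (intro CollectI exI[of _ "{}"]) auto

lemma K_HH: "K m \<in> HH" unfolding HH_def using E_K by (intro CollectI exI[of _ "{K m}"]) auto

lemma HH_Un: "H1 \<in> HH \<Longrightarrow> H2 \<in> HH \<Longrightarrow> H1 \<union> H2 \<in> HH"
proof -
  assume "H1 \<in> HH" "H2 \<in> HH"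
  then obtain F1 F2 where "H1 = \<Union>F1" "finite F1" "F1 \<subseteq> E" "H2 = \<Union>F2" "finite F2" "F2 \<subseteq> E"
    unfolding HH_def by blast
  then show ?thesis unfolding HH_def by (intro CollectI exI[of _ "F1 \<union> F2"]) auto
qed

lemma HH_finite_Union: "finite F \<Longrightarrow> F \<subseteq> E \<Longrightarrow> \<Union>F \<in> HH"
  unfolding HH_def by auto

lemma HH_compact: "H \<in> HH \<Longrightarrow> compact H"
  unfolding HH_def using E_compact by (auto intro!: compact_Union)

lemma HH_closed: "H \<in> HH \<Longrightarrow> closed H"
  using HH_compact compact_imp_closed by blast

lemma HH_borel[simp]: "H \<in> HH \<Longrightarrow> H \<in> sets borel"
  using HH_closed by auto

lemma Union_sub_K: "finite F \<Longrightarrow> F \<subseteq> E \<Longrightarrow> \<exists>m. \<Union>F \<subseteq> K m"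
proof (induction F rule: finite_induct)
  case empty
  then show ?case by auto
next
  case (insert x F)
  then have "x \<in> E" "F \<subseteq> E" by auto
  obtain m1 where m1: "x \<subseteq> K m1" using E_sub[OF \<open>x \<in> E\<close>] by (elim exE)
  obtain m2 where m2: "\<Union>F \<subseteq> K m2" using insert.IH[OF \<open>F \<subseteq> E\<close>] by (elim exE)
  have "K m1 \<subseteq> K (max m1 m2)" "K m2 \<subseteq> K (max m1 m2)"
    using K_mono by (auto simp: incseq_def)
  then have "\<Union>(insert x F) \<subseteq> K (max m1 m2)" using m1 m2 by auto
  then show ?case by (rule exI)
qed

lemma HH_sub: "H \<in> HH \<Longrightarrow> \<exists>m. H \<subseteq> K m"
proof -
  assume "H \<in> HH"
  then obtain F where "H = \<Union>F" "finite F" "F \<subseteq> E" unfolding HH_def by blast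
  then show ?thesis using Union_sub_K by simp
qed

definition hs where "hs = from_nat_into HH"

lemma range_hs: "range hs = HH"
  unfolding hs_def using range_from_nat_into[OF _ countable_HH] empty_HH by blast

definition rr where "rr = (SOME d. strict_mono d \<and> (\<forall>k. convergent (\<lambda>n. measure (M (d n)) (hs k))))"

lemma rr: "strict_mono rr" "\<And>k. convergent (\<lambda>n. measure (M (rr n)) (hs k))"
proof -
  have "\<exists>d. strict_mono d \<and> (\<forall>k. convergent (\<lambda>n. measure (M (d n)) (hs k)))"
    by (rule diagonal_convergent) (simp add: meas_le1)
  then have "strict_mono rr \<and> (\<forall>k. convergent (\<lambda>n. measure (M (rr n)) (hs k)))"
    unfolding rr_def by (rule someI_ex)
  then show "strict_mono rr" "\<And>k. convergent (\<lambda>n. measure (M (rr n)) (hs k))" by auto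
qed

definition alpha where "alpha H = lim (\<lambda>n. measure (M (rr n)) H)"

lemma alpha_lim: "H \<in> HH \<Longrightarrow> (\<lambda>n. measure (M (rr n)) H) \<longlonglongrightarrow> alpha H"
proof -
  assume "H \<in> HH"
  then obtain k where "H = hs k" using range_hs by blast
  then show ?thesis unfolding alpha_def using rr(2)[of k] by (simp add: convergent_LIMSEQ_iff)
qed

lemma alpha_nonneg: "H \<in> HH \<Longrightarrow> 0 \<le> alpha H"
  by (rule LIMSEQ_le_const[OF alpha_lim]) auto

lemma alpha_le1: "H \<in> HH \<Longrightarrow> alpha H \<le> 1"
  by (rule LIMSEQ_le_const2[OF alpha_lim]) (auto simp: meas_le1)

lemma alpha_mono: "H1 \<in> HH \<Longrightarrow> H2 \<in> HH \<Longrightarrow> H1 \<subseteq> H2 \<Longrightarrow> alpha H1 \<le> alpha H2"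
  by (rule LIMSEQ_le[OF alpha_lim alpha_lim])
     (auto intro!: finite_measure.finite_measure_mono[OF fm])

lemma alpha_Un_le: "H1 \<in> HH \<Longrightarrow> H2 \<in> HH \<Longrightarrow> alpha (H1 \<union> H2) \<le> alpha H1 + alpha H2"
  by (rule LIMSEQ_le[OF alpha_lim tendsto_add[OF alpha_lim alpha_lim]])
     (auto intro!: measure_Un_le HH_Un)

lemma alpha_Un_disj: "H1 \<in> HH \<Longrightarrow> H2 \<in> HH \<Longrightarrow> H1 \<inter> H2 = {} \<Longrightarrow> alpha (H1 \<union> H2) = alpha H1 + alpha H2"
  apply (rule LIMSEQ_unique[OF alpha_lim])
   apply (auto intro!: HH_Un)[1]
  apply (subst finite_measure.finite_measure_Union[OF fm])
     apply (auto intro!: tendsto_add alpha_lim)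
  done

lemma alpha_empty: "alpha {} = 0"
  unfolding alpha_def by simp

lemma alpha_K: "1 - 1 / Suc m \<le> alpha (K m)"
  by (rule LIMSEQ_le_const[OF alpha_lim[OF K_HH]]) (use K_big in blast)

definition beta where "beta G = (SUP H \<in> {H\<in>HH. H \<subseteq> G}. alpha H)"

lemma beta_bdd: "bdd_above (alpha ` {H\<in>HH. H \<subseteq> G})"
  using alpha_le1 by (auto intro!: bdd_aboveI)

lemma beta_ne: "{H\<in>HH. H \<subseteq> G} \<noteq> {}"
  using empty_HH by auto

lemma beta_ge: "H \<in> HH \<Longrightarrow> H \<subseteq> G \<Longrightarrow> alpha H \<le> beta G"
  unfolding beta_def by (rule cSUP_upper[OF _ beta_bdd]) auto

lemma beta_le: "(\<And>H. H \<in> HH \<Longrightarrow> H \<subseteq> G \<Longrightarrow> alpha H \<le> c) \<Longrightarrow> beta G \<le> c"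
  unfolding beta_def by (rule cSUP_least[OF beta_ne]) auto

lemma beta_approx: "e > 0 \<Longrightarrow> \<exists>H\<in>HH. H \<subseteq> G \<and> beta G - e < alpha H"
proof -
  assume "e > 0"
  then have "beta G - e < beta G" by simp
  then show ?thesis unfolding beta_def less_cSUP_iff[OF beta_ne beta_bdd] by auto
qed

lemma beta_mono: "G1 \<subseteq> G2 \<Longrightarrow> beta G1 \<le> beta G2"
  by (rule beta_le) (auto intro: beta_ge)

lemma beta_nonneg: "0 \<le> beta G"
  using beta_ge[OF empty_HH, of G] alpha_empty by simp

lemma beta_le1: "beta G \<le> 1"
  by (rule beta_le) (rule alpha_le1)

lemma beta_empty: "beta {} = 0"
  using beta_le[of "{}" 0] alpha_empty beta_nonneg[of "{}"] by force

lemma step1: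
  assumes "closed F" "open G" "F \<subseteq> G" "F \<subseteq> K m"
  shows "\<exists>H0\<in>HH. F \<subseteq> H0 \<and> H0 \<subseteq> G"
proof -
  have cF: "compact F"
    using closed_Int_compact[OF \<open>closed F\<close> K_compact[of m]] \<open>F \<subseteq> K m\<close> by (simp add: Int_absorb2)
  define I where "I = {(d,r). d \<in> D m \<and> r \<in> \<rat> \<and> r > 0 \<and> cball d r \<subseteq> G}"
  have cover: "F \<subseteq> (\<Union>p\<in>I. ball (fst p) (snd p))"
  proof
    fix x assume "x \<in> F"
    then have "x \<in> G" "x \<in> K m" using assms by auto
    obtain e where e: "e > 0" "ball x e \<subseteq> G" using open_contains_ball \<open>open G\<close> \<open>x\<in>G\<close> by blast
    obtain d where d: "d \<in> D m" "dist x d < e/3" using D(3)[OF \<open>x \<in> K m\<close>, of "e/3"] e by auto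
    obtain r where r: "r \<in> \<rat>" "e/3 < r" "r < 2*e/3" using Rats_dense_in_real[of "e/3" "2*e/3"] e by auto
    have "cball d r \<subseteq> ball x e"
    proof
      fix y assume "y \<in> cball d r"
      then have "dist d y \<le> r" by simp
      then have "dist x y < e" using dist_triangle[of x y d] d r by linarith
      then show "y \<in> ball x e" by simp
    qed
    then have "(d,r) \<in> I" unfolding I_def using d r e by auto
    moreover have "x \<in> ball d r" using d r by (simp add: dist_commute)
    ultimately show "x \<in> (\<Union>p\<in>I. ball (fst p) (snd p))" by force
  qed
  obtain J where J: "J \<subseteq> I" "finite J" "F \<subseteq> (\<Union>p\<in>J. ball (fst p) (snd p))"
    by (rule compactE_image[OF cF _ cover]) auto
  define H0 where "H0 = \<Union>((\<lambda>p. cball (fst p) (snd p) \<inter> K m) ` J)"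
  have "H0 \<in> HH" unfolding H0_def
    by (rule HH_finite_Union) (use J in \<open>auto simp: I_def intro!: E_ball\<close>)
  moreover have "F \<subseteq> H0"
  proof
    fix x assume "x \<in> F"
    then obtain p where "p \<in> J" "x \<in> ball (fst p) (snd p)" using J(3) by blast
    then show "x \<in> H0" unfolding H0_def using \<open>x \<in> F\<close> \<open>F \<subseteq> K m\<close>
      by (auto intro!: bexI[of _ p] less_imp_le)
  qed
  moreover have "H0 \<subseteq> G" using J(1) unfolding H0_def I_def by fastforce
  ultimately show ?thesis by blast
qed

lemma beta_Un:
  assumes "open G1" "open G2"
  shows "beta (G1 \<union> G2) \<le> beta G1 + beta G2"
proof (rule beta_le)
  fix H assume H: "H \<in> HH" "H \<subseteq> G1 \<union> G2"
  obtain m where m: "H \<subseteq> K m" using HH_sub H by blast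
  have cH: "closed H" using HH_closed H by auto
  have "closed (H - G1)" "closed (H - G2)" using cH assms by auto
  moreover have "(H - G1) \<inter> (H - G2) = {}" using H by auto
  ultimately obtain V1 V2 where V: "open V1" "open V2" "H - G1 \<subseteq> V1" "H - G2 \<subseteq> V2" "V1 \<inter> V2 = {}"
    by (rule metric_separation)
  have A1: "closed (H - V1)" "H - V1 \<subseteq> G1" "H - V1 \<subseteq> K m" using V cH m by auto
  have A2: "closed (H - V2)" "H - V2 \<subseteq> G2" "H - V2 \<subseteq> K m" using V cH m by auto
  obtain H1 where H1: "H1 \<in> HH" "H - V1 \<subseteq> H1" "H1 \<subseteq> G1" using step1[OF A1(1) assms(1) A1(2) A1(3)] by blast
  obtain H2 where H2: "H2 \<in> HH" "H - V2 \<subseteq> H2" "H2 \<subseteq> G2" using step1[OF A2(1) assms(2) A2(2) A2(3)] by blast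
  have "H \<subseteq> H1 \<union> H2" using H1 H2 V(5) by blast
  then have "alpha H \<le> alpha (H1 \<union> H2)" using H H1 H2 by (intro alpha_mono HH_Un) auto
  also have "\<dots> \<le> alpha H1 + alpha H2" using H1 H2 by (intro alpha_Un_le) auto
  also have "\<dots> \<le> beta G1 + beta G2" using H1 H2 by (intro add_mono beta_ge) auto
  finally show "alpha H \<le> beta G1 + beta G2" .
qed

lemma beta_finite_Un:
  fixes G :: "nat \<Rightarrow> 'x set" and N :: nat
  assumes "\<And>i. open (G i)"
  shows "beta (\<Union>i<N. G i) \<le> (\<Sum>i<N. beta (G i))"
proof (induction N)
  case 0
  then show ?case by (simp add: beta_empty)
next
  case (Suc N)
  have "beta (\<Union>i<Suc N. G i) = beta ((\<Union>i<N. G i) \<union> G N)"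
    by (simp add: lessThan_Suc Un_commute)
  also have "\<dots> \<le> beta (\<Union>i<N. G i) + beta (G N)"
    using assms by (intro beta_Un) auto
  also have "\<dots> \<le> (\<Sum>i<Suc N. beta (G i))" using Suc by simp
  finally show ?case .
qed

lemma beta_countable:
  fixes G :: "nat \<Rightarrow> 'x set"
  assumes "\<And>i. open (G i)"
  shows "ennreal (beta (\<Union>i. G i)) \<le> (\<Sum>i. ennreal (beta (G i)))"
proof (cases "(\<Sum>i. ennreal (beta (G i))) = \<top>")
  case True
  then show ?thesis by simp
next
  case False
  then obtain x where x: "(\<Sum>i. ennreal (beta (G i))) = ennreal x" "0 \<le> x"
    using ennreal_cases[of "\<Sum>i. ennreal (beta (G i))"] by auto
  have "beta (\<Union>i. G i) \<le> x"
  proof (rule beta_le)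
    fix H assume H: "H \<in> HH" "H \<subseteq> (\<Union>i. G i)"
    obtain J where J: "J \<subseteq> UNIV" "finite J" "H \<subseteq> (\<Union>i\<in>J. G i)"
      by (rule compactE_image[OF HH_compact[OF H(1)], of UNIV G]) (use assms H in auto)
    obtain N where N: "J \<subseteq> {..<N}" using finite_nat_bounded[OF J(2)] by blast
    have "H \<subseteq> (\<Union>i<N. G i)" using J N by blast
    then have "alpha H \<le> beta (\<Union>i<N. G i)" using H by (intro beta_ge) auto
    also have "\<dots> \<le> (\<Sum>i<N. beta (G i))" using assms by (rule beta_finite_Un)
    finally have 1: "alpha H \<le> (\<Sum>i<N. beta (G i))" .
    have "ennreal (\<Sum>i<N. beta (G i)) = (\<Sum>i<N. ennreal (beta (G i)))"
      by (rule sum_ennreal[symmetric]) (simp add: beta_nonneg)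
    also have "\<dots> \<le> (\<Sum>i. ennreal (beta (G i)))" by (intro sum_le_suminf summableI) auto
    finally have "ennreal (alpha H) \<le> ennreal x" using 1 x(1)
      by (metis ennreal_leI order_trans)
    then show "alpha H \<le> x" using x(2) by (simp add: ennreal_le_iff)
  qed
  then show ?thesis using x by (simp add: ennreal_leI)
qed

definition gamma where "gamma A = (INF G \<in> {G. open G \<and> A \<subseteq> G}. beta G)"

lemma gamma_ne: "{G. open G \<and> A \<subseteq> G} \<noteq> {}" by auto

lemma gamma_bdd: "bdd_below (beta ` {G. open G \<and> A \<subseteq> G})"
  using beta_nonneg by (auto intro!: bdd_belowI)

lemma gamma_le: "open G \<Longrightarrow> A \<subseteq> G \<Longrightarrow> gamma A \<le> beta G"
  unfolding gamma_def by (rule cINF_lower[OF gamma_bdd]) auto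

lemma gamma_ge: "(\<And>G. open G \<Longrightarrow> A \<subseteq> G \<Longrightarrow> c \<le> beta G) \<Longrightarrow> c \<le> gamma A"
  unfolding gamma_def by (rule cINF_greatest[OF gamma_ne]) auto

lemma gamma_approx: "e > 0 \<Longrightarrow> \<exists>G. open G \<and> A \<subseteq> G \<and> beta G < gamma A + e"
proof -
  assume "e > 0"
  then have "gamma A < gamma A + e" by simp
  then show ?thesis unfolding gamma_def cINF_less_iff[OF gamma_ne gamma_bdd] by auto
qed

lemma gamma_open: "open G \<Longrightarrow> gamma G = beta G"
  by (intro antisym gamma_le gamma_ge beta_mono) auto

lemma gamma_mono: "A \<subseteq> B \<Longrightarrow> gamma A \<le> gamma B"
  by (rule gamma_ge) (auto intro: gamma_le)

lemma gamma_nonneg: "0 \<le> gamma A"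
  by (rule gamma_ge) (rule beta_nonneg)

lemma gamma_le1: "gamma A \<le> 1"
  using gamma_le[of UNIV A] beta_le1[of UNIV] by auto

lemma gamma_empty: "gamma {} = 0"
  using gamma_open[of "{}"] beta_empty by simp

lemma gamma_Un: "gamma (A \<union> B) \<le> gamma A + gamma B"
proof (rule field_le_epsilon)
  fix e :: real assume e: "0 < e"
  obtain GA where GA: "open GA" "A \<subseteq> GA" "beta GA < gamma A + e/2" using gamma_approx[of "e/2"] e by auto
  obtain GB where GB: "open GB" "B \<subseteq> GB" "beta GB < gamma B + e/2" using gamma_approx[of "e/2"] e by auto
  have "gamma (A \<union> B) \<le> beta (GA \<union> GB)" using GA GB by (intro gamma_le) auto
  also have "\<dots> \<le> beta GA + beta GB" using GA GB by (intro beta_Un) auto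
  finally show "gamma (A \<union> B) \<le> gamma A + gamma B + e" using GA GB by simp
qed

lemma gamma_countable: fixes A :: "nat \<Rightarrow> 'x set" shows "ennreal (gamma (\<Union>i. A i)) \<le> (\<Sum>i. ennreal (gamma (A i)))"
proof (rule ennreal_le_epsilon)
  fix e :: real assume e: "0 < e"
  have "\<forall>i. \<exists>G. open G \<and> A i \<subseteq> G \<and> beta G < gamma (A i) + e * (1/2)^(Suc i)"
    using gamma_approx e by simp
  then obtain G where G: "\<And>i. open (G i)" "\<And>i. A i \<subseteq> G i" "\<And>i. beta (G i) < gamma (A i) + e * (1/2)^(Suc i)"
    by metis
  have "ennreal (gamma (\<Union>i. A i)) \<le> ennreal (beta (\<Union>i. G i))"
    using G by (intro ennreal_leI gamma_le) auto
  also have "\<dots> \<le> (\<Sum>i. ennreal (beta (G i)))" using G(1) by (rule beta_countable)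
  also have "\<dots> \<le> (\<Sum>i. ennreal (gamma (A i)) + ennreal (e * (1/2)^(Suc i)))"
  proof (rule suminf_le)
    fix i
    have "beta (G i) \<le> gamma (A i) + e * (1/2)^(Suc i)" using G(3)[of i] by simp
    then have "ennreal (beta (G i)) \<le> ennreal (gamma (A i) + e * (1/2)^(Suc i))" by (rule ennreal_leI)
    also have "\<dots> = ennreal (gamma (A i)) + ennreal (e * (1/2)^(Suc i))"
      using e gamma_nonneg by (intro ennreal_plus) auto
    finally show "ennreal (beta (G i)) \<le> ennreal (gamma (A i)) + ennreal (e * (1/2)^(Suc i))" .
  qed auto
  also have "\<dots> = (\<Sum>i. ennreal (gamma (A i))) + (\<Sum>i. ennreal (e * (1/2)^(Suc i)))"
    by (rule suminf_add[symmetric]) auto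
  also have "(\<Sum>i. ennreal (e * (1/2)^(Suc i))) = ennreal e"
  proof -
    have "(\<lambda>i. e * (1/2)^(Suc i)) sums (e * 1)" by (intro sums_mult power_half_series)
    then have "(\<Sum>i. ennreal (e * (1/2)^(Suc i))) = ennreal (\<Sum>i. e * (1/2)^(Suc i))"
      using e by (intro suminf_ennreal2) (auto simp: sums_iff)
    also have "\<dots> = ennreal e" using \<open>(\<lambda>i. e * (1/2)^(Suc i)) sums (e * 1)\<close> by (simp add: sums_iff)
    finally show ?thesis .
  qed
  finally show "ennreal (gamma (\<Union>i. A i)) \<le> (\<Sum>i. ennreal (gamma (A i))) + ennreal e" .
qed

lemma gamma_split:
  assumes "closed F" "open G"
  shows "gamma (F \<inter> G) + gamma (G - F) \<le> beta G"
proof (rule field_le_epsilon)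
  fix e :: real assume e: "0 < e"
  have oGF: "open (G - F)" using assms by auto
  obtain H3 where H3: "H3 \<in> HH" "H3 \<subseteq> G - F" "beta (G - F) - e/2 < alpha H3"
    using beta_approx[of "e/2" "G - F"] e by auto
  have oGH: "open (G - H3)" using assms HH_closed[OF H3(1)] by auto
  obtain H4 where H4: "H4 \<in> HH" "H4 \<subseteq> G - H3" "beta (G - H3) - e/2 < alpha H4"
    using beta_approx[of "e/2" "G - H3"] e by auto
  have "alpha H3 + alpha H4 = alpha (H3 \<union> H4)" using H3 H4 by (intro alpha_Un_disj[symmetric]) auto
  also have "\<dots> \<le> beta G" using H3 H4 by (intro beta_ge HH_Un) auto
  finally have 1: "alpha H3 + alpha H4 \<le> beta G" .
  have "gamma (G - F) \<le> beta (G - F)" using oGF by (intro gamma_le) auto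
  moreover have "gamma (F \<inter> G) \<le> beta (G - H3)" using oGH H3(2) by (intro gamma_le) auto
  ultimately show "gamma (F \<inter> G) + gamma (G - F) \<le> beta G + e" using 1 H3 H4 by linarith
qed

lemma gamma_carath:
  assumes "closed F"
  shows "gamma (F \<inter> X) + gamma ((UNIV - F) \<inter> X) = gamma X"
proof (rule antisym)
  show "gamma (F \<inter> X) + gamma ((UNIV - F) \<inter> X) \<le> gamma X"
  proof (rule gamma_ge)
    fix G assume G: "open G" "X \<subseteq> G"
    have "gamma (F \<inter> X) \<le> gamma (F \<inter> G)" using G by (intro gamma_mono) auto
    moreover have "gamma ((UNIV - F) \<inter> X) \<le> gamma (G - F)" using G by (intro gamma_mono) auto
    ultimately show "gamma (F \<inter> X) + gamma ((UNIV - F) \<inter> X) \<le> beta G"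
      using gamma_split[OF assms G(1)] by linarith
  qed
  have "X = (F \<inter> X) \<union> ((UNIV - F) \<inter> X)" by auto
  then show "gamma X \<le> gamma (F \<inter> X) + gamma ((UNIV - F) \<inter> X)"
    using gamma_Un by metis
qed

definition gm where "gm A = ennreal (gamma A)"

lemma oms: "outer_measure_space (UNIV :: 'x set set) gm"
  unfolding outer_measure_space_def positive_def increasing_def countably_subadditive_def gm_def
  by (auto simp: gamma_empty intro!: ennreal_leI gamma_mono gamma_countable)

lemma closed_lambda: "closed F \<Longrightarrow> F \<in> lambda_system UNIV UNIV gm"
  unfolding lambda_system_def gm_def
  by (auto simp: ennreal_plus[symmetric] gamma_nonneg gamma_carath simp del: ennreal_plus)

lemma sa_borel: "sigma_algebra (UNIV::'x set) (sets borel)"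
  using sets.sigma_algebra_axioms[of "borel :: 'x measure"] by simp

lemma ms_borel: "measure_space (UNIV::'x set) (sets borel) gm"
proof -
  have sa: "sigma_algebra (UNIV::'x set) UNIV" using sigma_algebra_Pow[of "UNIV :: 'x set"] by simp
  have ms: "measure_space UNIV (lambda_system UNIV UNIV gm) gm"
    by (rule sigma_algebra.caratheodory_lemma[OF sa oms])
  have "sigma_algebra UNIV (lambda_system UNIV UNIV gm)" using ms by (simp add: measure_space_def)
  then have "sigma_sets UNIV (Collect closed) \<subseteq> lambda_system UNIV UNIV gm"
    by (rule sigma_algebra.sigma_sets_subset) (auto intro: closed_lambda)
  moreover have "sets borel = sigma_sets (UNIV::'x set) (Collect closed)"
    by (subst borel_eq_closed) (simp add: sets_measure_of)
  ultimately have "sets borel \<subseteq> lambda_system UNIV UNIV gm" by simp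
  then show ?thesis by (rule measure_down[OF ms sa_borel])
qed

definition mu where "mu = measure_of UNIV (sets borel) gm"

lemma sets_mu[simp]: "sets mu = sets borel"
  unfolding mu_def using sigma_algebra.sigma_sets_eq[OF sa_borel]
  by (subst sets_measure_of) (auto dest: sets.sets_into_space)

lemma space_mu[simp]: "space mu = UNIV"
  using sets_eq_imp_space_eq[OF sets_mu] by simp

lemma emeasure_mu: "A \<in> sets borel \<Longrightarrow> emeasure mu A = ennreal (gamma A)"
  unfolding mu_def using ms_borel sa_borel
  by (subst emeasure_measure_of_sigma) (auto simp: measure_space_def gm_def)

lemma measure_mu: "A \<in> sets borel \<Longrightarrow> measure mu A = gamma A"
  by (simp add: measure_def emeasure_mu gamma_nonneg)

lemma prob_mu: "prob_space mu"
proof (rule prob_spaceI)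
  have "gamma UNIV = beta UNIV" by (simp add: gamma_open)
  moreover have "1 \<le> beta UNIV"
  proof (rule ccontr)
    assume "\<not> 1 \<le> beta UNIV"
    then have "0 < 1 - beta UNIV" by simp
    then obtain m where m: "inverse (real (Suc m)) < 1 - beta UNIV" using reals_Archimedean[of "1 - beta UNIV"] by blast
    have "1 - 1 / Suc m \<le> alpha (K m)" by (rule alpha_K)
    also have "\<dots> \<le> beta UNIV" by (intro beta_ge K_HH) auto
    finally show False using m by (simp add: inverse_eq_divide)
  qed
  ultimately have "gamma UNIV = 1" using beta_le1[of UNIV] by simp
  then show "emeasure mu (space mu) = 1" by (simp add: emeasure_mu)
qed

lemma open_liminf:
  assumes "open G" "0 < d"
  shows "eventually (\<lambda>n. measure mu G - d < measure (M (rr n)) G) sequentially"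
proof -
  have mG: "measure mu G = beta G" using assms by (simp add: measure_mu gamma_open)
  obtain H where H: "H \<in> HH" "H \<subseteq> G" "beta G - d/2 < alpha H" using beta_approx[of "d/2" G] assms by auto
  have "eventually (\<lambda>n. alpha H - d/2 < measure (M (rr n)) H) sequentially"
    using order_tendstoD(1)[OF alpha_lim[OF H(1)], of "alpha H - d/2"] assms by simp
  then show ?thesis
  proof (rule eventually_mono)
    fix n assume "alpha H - d/2 < measure (M (rr n)) H"
    moreover have "measure (M (rr n)) H \<le> measure (M (rr n)) G"
      using H assms by (intro finite_measure.finite_measure_mono[OF fm]) auto
    ultimately show "measure mu G - d < measure (M (rr n)) G" using H mG by linarith
  qed
qed

lemma lower_01:
  fixes g :: "'x \<Rightarrow> real" and e :: real
  assumes g: "continuous_on UNIV g" "\<And>x. 0 \<le> g x" "\<And>x. g x \<le> 1" and e: "0 < e"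
  shows "eventually (\<lambda>n. (\<integral>x. g x \<partial>mu) - e < (\<integral>x. g x \<partial>M (rr n))) sequentially"
proof -
  obtain k0 where k0: "inverse (real (Suc k0)) < e/2" using reals_Archimedean e by (metis half_gt_zero)
  define k where "k = Suc k0"
  have kpos: "real k > 0" unfolding k_def by simp
  have k: "1 / real k < e/2" using k0 unfolding k_def by (simp add: inverse_eq_divide)
  define G where "G i = {x. real i / real k < g x}" for i :: nat
  have oG: "open (G i)" for i unfolding G_def
    by (intro open_Collect_less continuous_on_const g(1))
  have bG: "G i \<in> sets borel" for i using oG by auto
  define s where "s x = (\<Sum>i\<in>{1..k}. indicator (G i) x) / real k" for x
  have s_eq: "(\<Sum>i\<in>{1..k}. indicator (G i) x) = real (card {i\<in>{1..k}. real i < real k * g x})" for x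
  proof -
    have "(\<Sum>i\<in>{1..k}. indicator (G i) x) = (\<Sum>i\<in>{1..k}. of_bool (real i < real k * g x) :: real)"
      using kpos by (intro sum.cong) (auto simp: G_def indicator_def pos_divide_less_eq mult.commute)
    also have "\<dots> = real (card ({1..k} \<inter> {i. real i < real k * g x}))" by (rule sum_of_bool_eq) auto
    also have "{1..k} \<inter> {i. real i < real k * g x} = {i\<in>{1..k}. real i < real k * g x}" by blast
    finally show ?thesis .
  qed
  have s_le: "s x \<le> g x" and s_ge: "g x \<le> s x + 1 / real k" for x
  proof -
    have "0 \<le> real k * g x" "real k * g x \<le> real k" using kpos g(2,3)[of x] by auto
    from count_levels[OF this]
    have c: "real k * g x - 1 \<le> real (card {i\<in>{1..k}. real i < real k * g x})"
            "real (card {i\<in>{1..k}. real i < real k * g x}) \<le> real k * g x" by auto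
    define C where "C = real (card {i\<in>{1..k}. real i < real k * g x})"
    have sx: "s x = C / real k" unfolding s_def s_eq C_def ..
    have c1: "real k * g x \<le> C + 1" "C \<le> real k * g x" using c unfolding C_def by auto
    show "s x \<le> g x" using c1(2) kpos by (simp add: sx pos_divide_le_eq mult.commute)
    have "g x \<le> (C + 1) / real k" using c1(1) kpos by (simp add: pos_le_divide_eq mult.commute)
    then show "g x \<le> s x + 1 / real k" by (simp add: sx add_divide_distrib)
  qed
  have s_meas: "s \<in> borel_measurable borel" unfolding s_def using bG by measurable
  have s_nn: "0 \<le> s x" for x unfolding s_def using kpos by (simp add: sum_nonneg)
  have s_bnd: "\<bar>s x\<bar> \<le> 1" for x using s_le[of x] g(3)[of x] s_nn[of x] by auto
  have g_meas: "g \<in> borel_measurable borel" using g(1) by (rule borel_measurable_continuous_onI)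
  have g_bnd: "\<bar>g x\<bar> \<le> 1" for x using g(2,3)[of x] by auto
  have int_s: "(\<integral>x. s x \<partial>P) = (\<Sum>i\<in>{1..k}. measure P (G i)) / real k"
    if "prob_space P" "sets P = sets borel" for P
    unfolding s_def using that bG by (intro integral_levels) auto
  have "eventually (\<lambda>n. \<forall>i\<in>{1..k}. measure mu (G i) - e/2 < measure (M (rr n)) (G i)) sequentially"
    using oG e by (intro eventually_ball_finite ballI open_liminf) auto
  then show ?thesis
  proof (rule eventually_mono)
    fix n assume n: "\<forall>i\<in>{1..k}. measure mu (G i) - e/2 < measure (M (rr n)) (G i)"
    have "(\<integral>x. g x \<partial>mu) \<le> (\<integral>x. s x + 1 / real k \<partial>mu)"
      using s_ge prob_mu g_meas g_bnd s_meas s_bnd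
      by (intro integral_mono integrable_bounded_borel[where B=1] integrable_bounded_borel[where B="1 + 1/real k"]
          Bochner_Integration.integrable_add integrable_const)
         (auto simp: prob_space_def finite_measure.emeasure_finite)
    also have "\<dots> = (\<integral>x. s x \<partial>mu) + 1 / real k"
      using prob_mu s_meas s_bnd prob_space.prob_space[OF prob_mu] k_def
      by (subst Bochner_Integration.integral_add)
         (auto intro!: integrable_bounded_borel[where B=1])
    also have "\<dots> = (\<Sum>i\<in>{1..k}. measure mu (G i)) / real k + 1 / real k"
      using prob_mu by (simp add: int_s)
    also have "(\<Sum>i\<in>{1..k}. measure mu (G i)) \<le> (\<Sum>i\<in>{1..k}. measure (M (rr n)) (G i) + e/2)"
    proof (rule sum_mono)
      fix i assume "i \<in> {1..k}"
      then show "measure mu (G i) \<le> measure (M (rr n)) (G i) + e/2" using n by fastforce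
    qed
    also have "\<dots> = (\<Sum>i\<in>{1..k}. measure (M (rr n)) (G i)) + real k * (e/2)"
      by (simp add: sum.distrib)
    also have "(\<Sum>i\<in>{1..k}. measure (M (rr n)) (G i)) = (\<integral>x. s x \<partial>M (rr n)) * real k"
      using prob sets_M kpos by (simp add: int_s)
    also have "(\<integral>x. s x \<partial>M (rr n)) \<le> (\<integral>x. g x \<partial>M (rr n))"
      using s_le prob sets_M g_meas g_bnd s_meas s_bnd
      by (intro integral_mono integrable_bounded_borel[where B=1]) auto
    finally have "(\<integral>x. g x \<partial>mu) \<le> (\<integral>x. g x \<partial>M (rr n)) + e/2 + 1 / real k"
      using kpos by (simp add: divide_right_mono add_divide_distrib)
    then show "(\<integral>x. g x \<partial>mu) - e < (\<integral>x. g x \<partial>M (rr n))" using k by linarith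
  qed
qed

lemma lower_bdd:
  fixes g :: "'x \<Rightarrow> real" and e B :: real
  assumes g: "continuous_on UNIV g" "\<And>x. \<bar>g x\<bar> \<le> B" and B: "0 < B" and e: "0 < e"
  shows "eventually (\<lambda>n. (\<integral>x. g x \<partial>mu) - e < (\<integral>x. g x \<partial>M (rr n))) sequentially"
proof -
  define h where "h x = (g x + B) / (2*B)" for x
  have hc: "continuous_on UNIV h" unfolding h_def using B
    by (intro continuous_intros g(1)) auto
  have h01: "0 \<le> h x" "h x \<le> 1" for x unfolding h_def using g(2)[of x] B by (auto simp: field_simps)
  have gm: "g \<in> borel_measurable borel" using g(1) by (rule borel_measurable_continuous_onI)
  have int_h: "(\<integral>x. h x \<partial>P) = ((\<integral>x. g x \<partial>P) + B) / (2*B)"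
    if P: "prob_space P" "sets P = sets borel" for P
  proof -
    have "(\<integral>x. h x \<partial>P) = (\<integral>x. g x + B \<partial>P) / (2*B)" unfolding h_def by (rule integral_divide_zero)
    also have "(\<integral>x. g x + B \<partial>P) = (\<integral>x. g x \<partial>P) + (\<integral>x. B \<partial>P)"
      using P gm g(2) B by (intro Bochner_Integration.integral_add integrable_bounded_borel[where B=B]) auto
    also have "(\<integral>x. B \<partial>P) = B" using prob_space.prob_space[OF P(1)] by simp
    finally show ?thesis .
  qed
  have "eventually (\<lambda>n. (\<integral>x. h x \<partial>mu) - e / (2*B) < (\<integral>x. h x \<partial>M (rr n))) sequentially"
    using hc h01 e B by (intro lower_01) auto
  then show ?thesis
  proof (rule eventually_mono)
    fix n assume "(\<integral>x. h x \<partial>mu) - e / (2*B) < (\<integral>x. h x \<partial>M (rr n))"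
    then have "((\<integral>x. g x \<partial>mu) + B - e) / (2*B) < ((\<integral>x. g x \<partial>M (rr n)) + B) / (2*B)"
      using int_h[OF prob_mu sets_mu] int_h[OF prob sets_M] by (simp add: diff_divide_distrib)
    then show "(\<integral>x. g x \<partial>mu) - e < (\<integral>x. g x \<partial>M (rr n))" using B by (simp add: divide_less_cancel)
  qed
qed

lemma lim_bdd:
  fixes g :: "'x \<Rightarrow> real"
  assumes "continuous_on UNIV g" "bounded (range g)"
  shows "(\<lambda>n. \<integral>x. g x \<partial>M (rr n)) \<longlonglongrightarrow> (\<integral>x. g x \<partial>mu)"
proof -
  obtain B where B: "0 < B" "\<And>x. \<bar>g x\<bar> \<le> B" using assms(2) unfolding bounded_pos by auto
  show ?thesis
  proof (rule order_tendstoI)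
    fix a assume "a < (\<integral>x. g x \<partial>mu)"
    then show "eventually (\<lambda>n. a < (\<integral>x. g x \<partial>M (rr n))) sequentially"
      using lower_bdd[OF assms(1) B(2) B(1), of "(\<integral>x. g x \<partial>mu) - a"] by simp
  next
    fix a assume a: "(\<integral>x. g x \<partial>mu) < a"
    have c: "continuous_on UNIV (\<lambda>x. - g x)" using assms(1) by (intro continuous_intros)
    have "eventually (\<lambda>n. (\<integral>x. - g x \<partial>mu) - (a - (\<integral>x. g x \<partial>mu)) < (\<integral>x. - g x \<partial>M (rr n))) sequentially"
      using a B by (intro lower_bdd[OF c, of B]) auto
    then show "eventually (\<lambda>n. (\<integral>x. g x \<partial>M (rr n)) < a) sequentially"
      by (rule eventually_mono) (simp add: Bochner_Integration.integral_minus)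
  qed
qed

end

lemma prokhorov_seq:
  fixes M :: "nat \<Rightarrow> 'x::metric_space measure"
  assumes prob: "\<And>n. prob_space (M n)" and sets: "\<And>n. sets (M n) = sets borel"
    and tight: "\<And>e. e > 0 \<Longrightarrow> \<exists>K. compact K \<and> (\<forall>n. 1 - e \<le> measure (M n) K)"
  shows "\<exists>r \<mu>. strict_mono r \<and> prob_space \<mu> \<and> sets \<mu> = sets borel \<and>
           (\<forall>g::'x \<Rightarrow> real. continuous_on UNIV g \<and> bounded (range g) \<longrightarrow>
              (\<lambda>n. \<integral>x. g x \<partial>M (r n)) \<longlonglongrightarrow> (\<integral>x. g x \<partial>\<mu>))"
proof -
  have "\<forall>m::nat. \<exists>K. compact K \<and> (\<forall>n. 1 - 1 / Suc m \<le> measure (M n) K)"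
    using tight by simp
  then obtain K0 where K0: "\<And>m. compact (K0 m)" "\<And>m n. 1 - 1 / Suc m \<le> measure (M n) (K0 m)"
    by metis
  define K where "K m = (\<Union>i\<le>m. K0 i)" for m
  have Kc: "compact (K m)" for m unfolding K_def using K0(1) by (intro compact_UN) auto
  have Km: "incseq K" unfolding K_def incseq_def by (auto intro: order_trans)
  have Kb: "1 - 1 / Suc m \<le> measure (M n) (K m)" for m n
  proof -
    have "measure (M n) (K0 m) \<le> measure (M n) (K m)"
      using prob[of n] sets[of n] Kc[of m] unfolding K_def
      by (intro finite_measure.finite_measure_mono) (auto simp: prob_space_def compact_imp_closed)
    then show ?thesis using K0(2)[of m n] by linarith
  qed
  interpret P: prok M K by (rule prok.intro[OF prob sets Kc Km Kb])
  have "\<forall>g::'x \<Rightarrow> real. continuous_on UNIV g \<and> bounded (range g) \<longrightarrow>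
              (\<lambda>n. \<integral>x. g x \<partial>M (P.rr n)) \<longlonglongrightarrow> (\<integral>x. g x \<partial>P.mu)"
    using P.lim_bdd by blast
  with P.rr(1) P.prob_mu P.sets_mu show ?thesis by blast
qed

lemma measure_eq_cb:
  fixes P Q :: "'x::metric_space measure"
  assumes fP: "finite_measure P" and fQ: "finite_measure Q"
    and sP: "sets P = sets borel" and sQ: "sets Q = sets borel"
    and eq: "\<And>g::'x\<Rightarrow>real. continuous_on UNIV g \<Longrightarrow> bounded (range g) \<Longrightarrow> (\<integral>x. g x \<partial>P) = (\<integral>x. g x \<partial>Q)"
  shows "P = Q"
proof -
  have spP: "space P = UNIV" using sP by (metis sets_eq_imp_space_eq space_borel)
  have spQ: "space Q = UNIV" using sQ by (metis sets_eq_imp_space_eq space_borel)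
  have closed_eq: "measure P F = measure Q F" if F: "closed F" for F
  proof (cases "F = {}")
    case True
    then show ?thesis by simp
  next
    case False
    define g where "g k x = max 0 (1 - real k * infdist x F)" for k :: nat and x
    have gc: "continuous_on UNIV (g k)" for k unfolding g_def
      by (intro continuous_intros continuous_on_infdist continuous_on_id)
    have gb: "\<bar>g k x\<bar> \<le> 1" for k x unfolding g_def using infdist_nonneg[of x F] by auto
    have gbd: "bounded (range (g k))" for k using gb unfolding bounded_iff by (auto intro!: exI[of _ 1])
    have gm: "g k \<in> borel_measurable borel" for k using gc by (rule borel_measurable_continuous_onI)
    have glim: "(\<lambda>k. g k x) \<longlonglongrightarrow> indicator F x" for x
    proof (cases "x \<in> F")
      case True
      then have "infdist x F = 0" using in_closed_iff_infdist_zero[OF F False] by simp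
      then show ?thesis using True by (simp add: g_def)
    next
      case xF: False
      then have "infdist x F \<noteq> 0" using in_closed_iff_infdist_zero[OF F False] by simp
      then have d: "infdist x F > 0" using infdist_nonneg[of x F] by linarith
      obtain N where N: "inverse (infdist x F) < real N" using reals_Archimedean2 by blast
      have "eventually (\<lambda>k. g k x = indicator F x) sequentially"
        unfolding eventually_sequentially
      proof (intro exI allI impI)
        fix k assume "N \<le> k"
        then have "inverse (infdist x F) < real k" using N by linarith
        then have "1 < real k * infdist x F" using d by (simp add: field_simps)
        then show "g k x = indicator F x" using xF by (simp add: g_def)
      qed
      then show ?thesis by (rule tendsto_eventually)
    qed
    have lim: "(\<lambda>k. \<integral>x. g k x \<partial>R) \<longlonglongrightarrow> measure R F"
      if R: "finite_measure R" "sets R = sets borel" "space R = UNIV" for R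
    proof -
      have mR: "measurable R borel = measurable borel (borel :: real measure)"
        by (rule measurable_cong_sets[OF R(2) refl])
      have "(\<lambda>k. \<integral>x. g k x \<partial>R) \<longlonglongrightarrow> (\<integral>x. indicator F x \<partial>R)"
      proof (rule integral_dominated_convergence[where w="\<lambda>_. 1"])
        show "(indicator F :: 'x \<Rightarrow> real) \<in> borel_measurable R"
          using mR borel_measurable_indicator[of F borel] F by simp
        show "g k \<in> borel_measurable R" for k using mR gm by simp
        show "integrable R (\<lambda>_. 1::real)" using R(1) by (simp add: finite_measure.integrable_const)
        show "AE x in R. (\<lambda>k. g k x) \<longlonglongrightarrow> indicator F x" using glim by simp
        show "AE x in R. norm (g k x) \<le> 1" for k using gb by simp
      qed
      then show ?thesis using R(3) by simp
    qed
    have "(\<lambda>k. \<integral>x. g k x \<partial>P) \<longlonglongrightarrow> measure Q F"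
      using lim[OF fQ sQ spQ] eq[OF gc gbd] by simp
    then show ?thesis using lim[OF fP sP spP] LIMSEQ_unique by blast
  qed
  have sb: "sets borel = sigma_sets (UNIV::'x set) (Collect closed)"
    by (subst borel_eq_closed) (simp add: sets_measure_of)
  show ?thesis
  proof (rule measure_eqI_generator_eq[where E="Collect closed" and \<Omega>=UNIV and A="\<lambda>_. UNIV"])
    show "Int_stable (Collect closed :: 'x set set)" by (auto simp: Int_stable_def)
    show "Collect closed \<subseteq> Pow (UNIV :: 'x set)" by auto
    show "emeasure P X = emeasure Q X" if "X \<in> Collect closed" for X
      using that closed_eq[of X] sP sQ
      by (simp add: finite_measure.emeasure_eq_measure[OF fP] finite_measure.emeasure_eq_measure[OF fQ])
    show "sets P = sigma_sets UNIV (Collect closed)" using sP sb by simp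
    show "sets Q = sigma_sets UNIV (Collect closed)" using sQ sb by simp
    show "range (\<lambda>_. UNIV) \<subseteq> Collect (closed :: 'x set \<Rightarrow> bool)" by auto
    show "(\<Union>i::nat. UNIV) = (UNIV :: 'x set)" by simp
    show "emeasure P UNIV \<noteq> \<infinity>" for i :: nat
      using finite_measure.emeasure_finite[OF fP, of UNIV] by (simp add: top_ennreal_def)
  qed
qed

lemma cont_meas_borel_of:
  assumes "continuous_map X euclideanreal f"
  shows "f \<in> borel_measurable (borel_of X)"
  unfolding borel_def borel_of_def
proof (rule measurable_measure_of)
  show "{S::real set. open S} \<subseteq> Pow UNIV" by auto
  show "f \<in> space (sigma (topspace X) {U. openin X U}) \<rightarrow> UNIV" by auto
  fix y :: "real set" assume "y \<in> {S. open S}"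
  then have "openin X {x \<in> topspace X. f x \<in> y}"
    using openin_continuous_map_preimage[OF assms] by auto
  moreover have "space (sigma (topspace X) {U. openin X U}) = topspace X"
    by (simp add: space_measure_of_conv)
  ultimately show "f -` y \<inter> space (sigma (topspace X) {U. openin X U}) \<in> sets (sigma (topspace X) {U. openin X U})"
    using openin_subset by (subst sets_measure_of) (auto intro!: sigma_sets.Basic simp: Int_commute Collect_conj_eq vimage_def)
qed

lemma pseudo:
  fixes f :: "'s::metric_space \<times> 'm \<Rightarrow> real" and T :: "'m topology"
  assumes S: "compact (UNIV::'s set)"
    and fc: "continuous_map (prod_topology euclidean T) euclideanreal f"
    and sc: "\<And>ms::nat \<Rightarrow> 'm. (\<forall>n. ms n \<in> topspace T) \<Longrightarrow> \<exists>r m. strict_mono r \<and> m \<in> topspace T \<and> limitin T (ms \<circ> r) m sequentially"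
  shows "\<exists>B. \<forall>s. \<forall>m\<in>topspace T. \<bar>f (s,m)\<bar> \<le> B"
proof (rule ccontr)
  assume "\<not> ?thesis"
  then have "\<forall>n::nat. \<exists>s m. m \<in> topspace T \<and> real n < \<bar>f (s,m)\<bar>" by (meson not_le)
  then obtain s ms where p: "\<And>n. ms n \<in> topspace T" "\<And>n. real n < \<bar>f (s n, ms n)\<bar>" by metis
  obtain l r1 where r1: "strict_mono r1" "(s \<circ> r1) \<longlonglongrightarrow> l"
    using compact_imp_seq_compact[OF S] unfolding seq_compact_def by blast
  obtain r2 m where r2: "strict_mono r2" "m \<in> topspace T" "limitin T ((ms \<circ> r1) \<circ> r2) m sequentially"
    using sc[of "ms \<circ> r1"] p(1) by auto
  define q where "q = r1 \<circ> r2"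
  have q: "strict_mono q" unfolding q_def using r1(1) r2(1) by (rule strict_mono_o)
  have "(s \<circ> q) \<longlonglongrightarrow> l" unfolding q_def using LIMSEQ_subseq_LIMSEQ[OF r1(2) r2(1)] by (simp add: o_assoc)
  moreover have "limitin T (ms \<circ> q) m sequentially" using r2(3) unfolding q_def by (simp add: o_assoc)
  ultimately have "limitin (prod_topology euclidean T) (\<lambda>n. (s (q n), ms (q n))) (l, m) sequentially"
    by (simp add: limitin_pairwise o_def limitin_canonical_iff)
  from continuous_map_limit[OF fc this]
  have "(\<lambda>n. f (s (q n), ms (q n))) \<longlonglongrightarrow> f (l, m)" by (simp add: o_def limitin_canonical_iff)
  then have "Bseq (\<lambda>n. f (s (q n), ms (q n)))" by (rule convergent_imp_Bseq[OF convergentI])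
  then obtain K where K: "\<And>n. \<bar>f (s (q n), ms (q n))\<bar> \<le> K" unfolding Bseq_def by auto
  obtain n :: nat where n: "K < real n" using reals_Archimedean2 by blast
  have "real n \<le> real (q n)" using seq_suble[OF q] by simp
  then show False using p(2)[of "q n"] K[of n] n by linarith
qed

lemma topspace_WT: "topspace (WT \<nu>) = Delta_nu \<nu>"
proof -
  have "Delta_nu \<nu> \<in> {{\<mu> \<in> Delta_nu \<nu>. (\<integral>x. g x \<partial>\<mu>) \<in> U} | g U.
        continuous_on UNIV g \<and> bounded (range g) \<and> open (U :: real set)}"
    by (rule CollectI, rule exI[of _ "\<lambda>_. 0::real"], rule exI[of _ UNIV]) auto
  then show ?thesis
    unfolding WT_def weak_topology_def topology_generated_by_topspace by blast
qed

lemma limitin_WT: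
  fixes ms :: "nat \<Rightarrow> ('c::topological_space \<times> 'b::topological_space) measure"
  assumes ms: "\<And>n. ms n \<in> Delta_nu \<nu>" and m: "m \<in> Delta_nu \<nu>"
    and lim: "\<And>g::('c \<times> 'b) \<Rightarrow> real. continuous_on UNIV g \<Longrightarrow> bounded (range g) \<Longrightarrow>
              (\<lambda>n. \<integral>x. g x \<partial>ms n) \<longlonglongrightarrow> (\<integral>x. g x \<partial>m)"
  shows "limitin (WT \<nu>) ms m sequentially"
  unfolding limitin_def topspace_WT
proof (intro conjI allI impI)
  show "m \<in> Delta_nu \<nu>" by fact
  fix U assume "openin (WT \<nu>) U \<and> m \<in> U"
  then have U: "generate_topology_on {{\<mu> \<in> Delta_nu \<nu>. (\<integral>x. g x \<partial>\<mu>) \<in> U} | g U.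
        continuous_on UNIV g \<and> bounded (range g) \<and> open (U :: real set)} U" "m \<in> U"
    unfolding WT_def weak_topology_def openin_topology_generated_by_iff by auto
  show "eventually (\<lambda>n. ms n \<in> U) sequentially"
    using U
  proof (induction rule: generate_topology_on.induct)
    case Empty
    then show ?case by simp
  next
    case (Int a b)
    then show ?case by (auto intro: eventually_conj)
  next
    case (UN K)
    then obtain k where "k \<in> K" "m \<in> k" by auto
    then have "eventually (\<lambda>n. ms n \<in> k) sequentially" using UN by auto
    then show ?case by (rule eventually_mono) (use \<open>k \<in> K\<close> in auto)
  next
    case (Basis s)
    from Basis(1) have "\<exists>(g::'c \<times> 'b \<Rightarrow> real) (V::real set). s = {\<mu> \<in> Delta_nu \<nu>. (\<integral>x. g x \<partial>\<mu>) \<in> V} \<and>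
      continuous_on UNIV g \<and> bounded (range g) \<and> open V" by (simp only: mem_Collect_eq)
    then obtain g :: "'c \<times> 'b \<Rightarrow> real" and V :: "real set" where s: "s = {\<mu> \<in> Delta_nu \<nu>. (\<integral>x. g x \<partial>\<mu>) \<in> V}"
      "continuous_on UNIV g" "bounded (range g)" "open V" by (elim exE conjE)
    then have "(\<integral>x. g x \<partial>m) \<in> V" using Basis by auto
    then have "eventually (\<lambda>n. (\<integral>x. g x \<partial>ms n) \<in> V) sequentially"
      using topological_tendstoD[OF lim[OF s(2,3)] s(4)] by auto
    then show ?case by (rule eventually_mono) (use ms s(1) in auto)
  qed
qed

lemma Delta_nuD:
  assumes "\<mu> \<in> Delta_nu \<nu>"
  shows "prob_space \<mu>" "sets \<mu> = sets borel" "distr \<mu> borel fst = \<nu>"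
  using assms unfolding Delta_nu_def prob_measures_def by auto

lemma fst_meas:
  fixes \<mu> :: "('c::topological_space \<times> 'b::topological_space) measure"
  assumes "sets \<mu> = sets borel"
  shows "fst \<in> measurable \<mu> (borel :: 'c measure)"
proof -
  have "measurable \<mu> (borel :: 'c measure) = measurable borel borel"
    by (rule measurable_cong_sets[OF assms refl])
  moreover have "(fst :: 'c \<times> 'b \<Rightarrow> 'c) \<in> measurable borel borel"
    by (intro borel_measurable_continuous_onI continuous_intros)
  ultimately show ?thesis by simp
qed

lemma marg_measure:
  assumes "\<mu> \<in> Delta_nu \<nu>" "K \<in> sets borel"
  shows "measure \<mu> (K \<times> UNIV) = measure \<nu> K"
proof -
  have sp: "space \<mu> = UNIV" using Delta_nuD(2)[OF assms(1)] by (metis sets_eq_imp_space_eq space_borel)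
  have "measure \<nu> K = measure (distr \<mu> borel fst) K" using Delta_nuD(3)[OF assms(1)] by simp
  also have "\<dots> = measure \<mu> (fst -` K \<inter> space \<mu>)"
    by (rule measure_distr[OF fst_meas[OF Delta_nuD(2)[OF assms(1)]] assms(2)])
  finally show ?thesis by (simp add: sp vimage_fst)
qed

lemma marg_integral:
  fixes h :: "'c::topological_space \<Rightarrow> real"
  assumes "\<mu> \<in> Delta_nu \<nu>" "h \<in> borel_measurable borel"
  shows "(\<integral>x. h x \<partial>\<nu>) = (\<integral>x. h (fst x) \<partial>\<mu>)"
proof -
  have "(\<integral>x. h x \<partial>\<nu>) = (\<integral>x. h x \<partial>distr \<mu> borel fst)" using Delta_nuD(3)[OF assms(1)] by simp
  also have "\<dots> = (\<integral>x. h (fst x) \<partial>\<mu>)"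
    by (rule integral_distr[OF fst_meas[OF Delta_nuD(2)[OF assms(1)]] assms(2)])
  finally show ?thesis .
qed

lemma Delta_nu_tight:
  fixes \<nu> :: "'c::polish_space measure"
  assumes nu: "prob_space \<nu>" "sets \<nu> = sets borel" and A: "compact (UNIV::'a::metric_space set)"
    and e: "0 < e"
  shows "\<exists>K. compact K \<and> (\<forall>\<mu>\<in>Delta_nu \<nu>. 1 - e \<le> measure \<mu> (K::('c \<times> 'a) set))"
proof (cases "1 \<le> e")
  case True
  then show ?thesis by (intro exI[of _ "{}"]) auto
next
  case False
  have spn: "space \<nu> = UNIV" using nu(2) by (metis sets_eq_imp_space_eq space_borel)
  have e1: "emeasure \<nu> UNIV = 1" using prob_space.emeasure_space_1[OF nu(1)] spn by simp
  have "emeasure \<nu> UNIV = (SUP K \<in> {K. K \<subseteq> UNIV \<and> compact K}. emeasure \<nu> K)"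
    by (rule inner_regular[OF nu(2)]) (auto simp: e1 spn)
  moreover have "ennreal (1 - e) < 1" using e False by (simp add: ennreal_lessI)
  ultimately have "ennreal (1 - e) < (SUP K \<in> {K. K \<subseteq> UNIV \<and> compact K}. emeasure \<nu> K)"
    using e1 by simp
  then obtain K0 where K0: "compact K0" "ennreal (1 - e) < emeasure \<nu> K0"
    unfolding less_SUP_iff by auto
  have "ennreal (1 - e) < ennreal (measure \<nu> K0)"
    using K0(2) finite_measure.emeasure_eq_measure[of \<nu> K0] nu(1) by (simp add: prob_space_def)
  then have m: "1 - e < measure \<nu> K0" using False by (simp add: ennreal_less_iff)
  show ?thesis
  proof (intro exI conjI ballI)
    show "compact (K0 \<times> (UNIV :: 'a set))" using K0(1) A by (rule compact_Times)
    fix \<mu> assume "\<mu> \<in> Delta_nu \<nu>"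
    then have "measure \<mu> (K0 \<times> UNIV) = measure \<nu> K0"
      using K0(1) by (intro marg_measure) (auto simp: compact_imp_closed)
    then show "1 - e \<le> measure \<mu> (K0 \<times> UNIV)" using m by simp
  qed
qed

lemma Delta_nu_seqc:
  fixes \<nu> :: "'c::polish_space measure" and ms :: "nat \<Rightarrow> ('c \<times> 'a::metric_space) measure"
  assumes nu: "prob_space \<nu>" "sets \<nu> = sets borel" and A: "compact (UNIV::'a set)"
    and ms: "\<And>n. ms n \<in> Delta_nu \<nu>"
  shows "\<exists>r m. strict_mono r \<and> m \<in> Delta_nu \<nu> \<and> limitin (WT \<nu>) (ms \<circ> r) m sequentially"
proof -
  have "\<exists>r \<mu>. strict_mono r \<and> prob_space \<mu> \<and> sets \<mu> = sets borel \<and>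
           (\<forall>g::('c \<times> 'a) \<Rightarrow> real. continuous_on UNIV g \<and> bounded (range g) \<longrightarrow>
              (\<lambda>n. \<integral>x. g x \<partial>ms (r n)) \<longlonglongrightarrow> (\<integral>x. g x \<partial>\<mu>))"
  proof (rule prokhorov_seq)
    show "prob_space (ms n)" for n using Delta_nuD(1)[OF ms] .
    show "sets (ms n) = sets borel" for n using Delta_nuD(2)[OF ms] .
    fix e :: real assume "e > 0"
    obtain K :: "('c \<times> 'a) set" where K: "compact K" "\<forall>\<mu>\<in>Delta_nu \<nu>. 1 - e \<le> measure \<mu> K"
      using Delta_nu_tight[OF nu A \<open>e > 0\<close>] by (elim exE conjE)
    show "\<exists>K. compact K \<and> (\<forall>n. 1 - e \<le> measure (ms n) K)"
    proof (intro exI conjI allI)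
      show "compact K" by (rule K(1))
      fix n show "1 - e \<le> measure (ms n) K" by (rule bspec[OF K(2) ms])
    qed
  qed
  then obtain r m where r: "strict_mono r" "prob_space m" "sets m = sets borel"
    and lim: "\<And>g::('c \<times> 'a) \<Rightarrow> real. continuous_on UNIV g \<Longrightarrow> bounded (range g) \<Longrightarrow>
              (\<lambda>n. \<integral>x. g x \<partial>ms (r n)) \<longlonglongrightarrow> (\<integral>x. g x \<partial>m)"
    by blast
  have fm: "fst \<in> measurable m (borel :: 'c measure)" using fst_meas[OF r(3)] .
  have "distr m borel fst = \<nu>"
  proof (rule measure_eq_cb)
    show "finite_measure (distr m borel fst)"
      using prob_space.prob_space_distr[OF r(2) fm] by (simp add: prob_space_def)
    show "finite_measure \<nu>" using nu(1) by (simp add: prob_space_def)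
    show "sets (distr m borel fst) = sets borel" by simp
    show "sets \<nu> = sets borel" by fact
    fix h :: "'c \<Rightarrow> real" assume hc: "continuous_on UNIV h" and hb: "bounded (range h)"
    have hm: "h \<in> borel_measurable borel" using hc by (rule borel_measurable_continuous_onI)
    have c2: "continuous_on UNIV (\<lambda>x::'c \<times> 'a. h (fst x))"
      by (intro continuous_on_compose2[OF hc] continuous_intros) auto
    have b2: "bounded (range (\<lambda>x::'c \<times> 'a. h (fst x)))"
      using hb by (rule bounded_subset) auto
    have "(\<lambda>n. \<integral>x. h (fst x) \<partial>ms (r n)) \<longlonglongrightarrow> (\<integral>x. h (fst x) \<partial>m)" using lim[OF c2 b2] .
    moreover have "(\<lambda>n. \<integral>x. h (fst x) \<partial>ms (r n)) = (\<lambda>n. \<integral>x. h x \<partial>\<nu>)"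
      using marg_integral[OF ms hm] by simp
    ultimately have "(\<integral>x. h (fst x) \<partial>m) = (\<integral>x. h x \<partial>\<nu>)"
      using LIMSEQ_unique tendsto_const by metis
    then show "(\<integral>x. h x \<partial>distr m borel fst) = (\<integral>x. h x \<partial>\<nu>)"
      by (simp add: integral_distr[OF fm hm])
  qed
  then have mD: "m \<in> Delta_nu \<nu>" using r(2,3) unfolding Delta_nu_def prob_measures_def by auto
  have "limitin (WT \<nu>) (ms \<circ> r) m sequentially"
    using ms mD lim by (intro limitin_WT) (auto simp: o_def)
  then show ?thesis using r(1) mD by blast
qed

theorem lemma5:
  fixes \<nu> :: "'c::polish_space measure"
    and v :: "'c \<Rightarrow> 'a::{metric_space,lattice} \<Rightarrow> 's::metric_space \<Rightarrow> ('c \<times> 'a) measure \<Rightarrow> real"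
  assumes nu: "prob_space \<nu>" "sets \<nu> = sets borel"
    and A_compact: "compact (UNIV :: 'a set)"
    and sup_cont: "continuous_on UNIV (\<lambda>p :: 'a \<times> 'a. sup (fst p) (snd p))"
    and inf_cont: "continuous_on UNIV (\<lambda>p :: 'a \<times> 'a. inf (fst p) (snd p))"
    and S_compact: "compact (UNIV :: 's set)"
    and v_cont: "continuous_map
                   (prod_topology euclidean (prod_topology euclidean (prod_topology euclidean (WT \<nu>))))
                   euclideanreal (\<lambda>(c, a, s, \<mu>). v c a s \<mu>)"
    and v_supermod: "\<And>c a a' s \<mu>. \<mu> \<in> Delta_nu \<nu> \<Longrightarrow>
                        v c (sup a a') s \<mu> + v c (inf a a') s \<mu> \<ge> v c a s \<mu> + v c a' s \<mu>"
    and v_incdiff: "\<And>c a a' s \<mu> \<mu>'. a' \<le> a \<Longrightarrow> \<mu> \<in> Delta_nu \<nu> \<Longrightarrow> \<mu>' \<in> Delta_nu \<nu> \<Longrightarrow>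
                        stoch_ge borel ca_ge \<mu> \<mu>' \<Longrightarrow>
                        v c a s \<mu> - v c a' s \<mu> \<ge> v c a s \<mu>' - v c a' s \<mu>'"
  shows "(\<forall>c a a' \<kappa>. \<kappa> \<in> prob_measures (MS \<nu>) \<longrightarrow>
             Vint v c (sup a a') \<kappa> + Vint v c (inf a a') \<kappa> \<ge> Vint v c a \<kappa> + Vint v c a' \<kappa>)
       \<and> (\<forall>c a a' \<kappa> \<kappa>'. a' \<le> a \<and> \<kappa> \<in> prob_measures (MS \<nu>) \<and> \<kappa>' \<in> prob_measures (MS \<nu>) \<and>
             stoch_ge (MS \<nu>) sm_ge \<kappa> \<kappa>' \<longrightarrow>
             Vint v c a \<kappa> - Vint v c a' \<kappa> \<ge> Vint v c a \<kappa>' - Vint v c a' \<kappa>')"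
proof -
  have sc: "\<exists>r m. strict_mono r \<and> m \<in> topspace (WT \<nu>) \<and> limitin (WT \<nu>) (ms \<circ> r) m sequentially"
    if "\<forall>n. ms n \<in> topspace (WT \<nu>)" for ms :: "nat \<Rightarrow> ('c \<times> 'a) measure"
    using Delta_nu_seqc[OF nu A_compact, of ms] that by (simp add: topspace_WT)
  have cont: "continuous_map (prod_topology euclidean (WT \<nu>)) euclideanreal (\<lambda>p. v c a (fst p) (snd p))"
    for c a
  proof -
    have "continuous_map (prod_topology euclidean (WT \<nu>))
           (prod_topology euclidean (prod_topology euclidean (prod_topology euclidean (WT \<nu>))))
           (\<lambda>p. (c, a, fst p, snd p))"
      by (intro continuous_map_pairedI continuous_map_fst continuous_map_snd) auto
    from continuous_map_compose[OF this v_cont] show ?thesis by (simp add: o_def case_prod_beta')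
  qed
  have bnd: "\<exists>B. \<forall>s. \<forall>\<mu>\<in>Delta_nu \<nu>. \<bar>v c a s \<mu>\<bar> \<le> B" for c a
    using pseudo[OF S_compact cont[of c a] sc] by (simp add: topspace_WT)
  have spMS: "space (MS \<nu>) = UNIV \<times> Delta_nu \<nu>"
    unfolding MS_def borel_of_def by (simp add: space_measure_of_conv topspace_WT)
  have measMS: "(\<lambda>p. v c a (fst p) (snd p)) \<in> borel_measurable (MS \<nu>)" for c a
    unfolding MS_def by (rule cont_meas_borel_of[OF cont])
  have kD: "prob_space \<kappa>" "sets \<kappa> = sets (MS \<nu>)" "space \<kappa> = UNIV \<times> Delta_nu \<nu>"
    if "\<kappa> \<in> prob_measures (MS \<nu>)" for \<kappa> :: "('s \<times> ('c \<times> 'a) measure) measure"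
    using that spMS unfolding prob_measures_def by (auto dest: sets_eq_imp_space_eq)
  have integ: "integrable \<kappa> (\<lambda>p. v c a (fst p) (snd p))" if k: "\<kappa> \<in> prob_measures (MS \<nu>)" for \<kappa> :: "('s \<times> ('c \<times> 'a) measure) measure" and c a
  proof -
    obtain B where B: "\<And>s \<mu>. \<mu> \<in> Delta_nu \<nu> \<Longrightarrow> \<bar>v c a s \<mu>\<bar> \<le> B" using bnd[of c a] by blast
    have fm: "finite_measure \<kappa>" using kD(1)[OF k] by (simp add: prob_space_def)
    have "measurable \<kappa> (borel :: real measure) = measurable (MS \<nu>) borel"
      by (rule measurable_cong_sets[OF kD(2)[OF k] refl])
    then have m: "(\<lambda>p. v c a (fst p) (snd p)) \<in> borel_measurable \<kappa>" using measMS by simp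
    have ae: "AE p in \<kappa>. norm (v c a (fst p) (snd p)) \<le> B"
      by (rule AE_I2) (use B kD(3)[OF k] in auto)
    show ?thesis by (rule finite_measure.integrable_const_bound[OF fm ae m])
  qed
  show ?thesis
  proof (intro conjI allI impI)
    fix c and a a' :: 'a and \<kappa> :: "('s \<times> ('c \<times> 'a) measure) measure" assume k: "\<kappa> \<in> prob_measures (MS \<nu>)"
    have i1: "integrable \<kappa> (\<lambda>p. v c a (fst p) (snd p))" by (rule integ[OF k])
    have i2: "integrable \<kappa> (\<lambda>p. v c a' (fst p) (snd p))" by (rule integ[OF k])
    have i3: "integrable \<kappa> (\<lambda>p. v c (sup a a') (fst p) (snd p))" by (rule integ[OF k])
    have i4: "integrable \<kappa> (\<lambda>p. v c (inf a a') (fst p) (snd p))" by (rule integ[OF k])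
    have pw: "v c a (fst p) (snd p) + v c a' (fst p) (snd p)
                 \<le> v c (sup a a') (fst p) (snd p) + v c (inf a a') (fst p) (snd p)" if "p \<in> space \<kappa>" for p
    proof -
      have "snd p \<in> Delta_nu \<nu>" using that unfolding kD(3)[OF k] by (simp add: mem_Times_iff)
      then show ?thesis by (rule v_supermod)
    qed
    have "(\<integral>p. v c a (fst p) (snd p) + v c a' (fst p) (snd p) \<partial>\<kappa>)
          \<le> (\<integral>p. v c (sup a a') (fst p) (snd p) + v c (inf a a') (fst p) (snd p) \<partial>\<kappa>)"
      by (rule integral_mono[OF Bochner_Integration.integrable_add[OF i1 i2]
                                Bochner_Integration.integrable_add[OF i3 i4] pw])
    moreover have "(\<integral>p. v c a (fst p) (snd p) + v c a' (fst p) (snd p) \<partial>\<kappa>) = Vint v c a \<kappa> + Vint v c a' \<kappa>"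
      unfolding Vint_def by (rule Bochner_Integration.integral_add[OF i1 i2])
    moreover have "(\<integral>p. v c (sup a a') (fst p) (snd p) + v c (inf a a') (fst p) (snd p) \<partial>\<kappa>)
                   = Vint v c (sup a a') \<kappa> + Vint v c (inf a a') \<kappa>"
      unfolding Vint_def by (rule Bochner_Integration.integral_add[OF i3 i4])
    ultimately show "Vint v c a \<kappa> + Vint v c a' \<kappa> \<le> Vint v c (sup a a') \<kappa> + Vint v c (inf a a') \<kappa>"
      by linarith
  next
    fix c and a a' :: 'a and \<kappa> \<kappa>' :: "('s \<times> ('c \<times> 'a) measure) measure"
    assume H: "a' \<le> a \<and> \<kappa> \<in> prob_measures (MS \<nu>) \<and> \<kappa>' \<in> prob_measures (MS \<nu>) \<and>
             stoch_ge (MS \<nu>) sm_ge \<kappa> \<kappa>'"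
    then have aa: "a' \<le> a" and k: "\<kappa> \<in> prob_measures (MS \<nu>)" and k': "\<kappa>' \<in> prob_measures (MS \<nu>)"
      and st: "stoch_ge (MS \<nu>) sm_ge \<kappa> \<kappa>'" by auto
    define D where "D p = v c a (fst p) (snd p) - v c a' (fst p) (snd p)" for p
    obtain B1 where B1: "\<And>s \<mu>. \<mu> \<in> Delta_nu \<nu> \<Longrightarrow> \<bar>v c a s \<mu>\<bar> \<le> B1" using bnd[of c a] by blast
    obtain B2 where B2: "\<And>s \<mu>. \<mu> \<in> Delta_nu \<nu> \<Longrightarrow> \<bar>v c a' s \<mu>\<bar> \<le> B2" using bnd[of c a'] by blast
    have Dm: "D \<in> borel_measurable (MS \<nu>)" unfolding D_def by (rule borel_measurable_diff[OF measMS measMS])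
    have Db: "bounded (D ` space (MS \<nu>))"
      unfolding bounded_iff
    proof (intro exI ballI)
      fix y assume "y \<in> D ` space (MS \<nu>)"
      then obtain p where p: "p \<in> space (MS \<nu>)" "y = D p" by auto
      have sp: "snd p \<in> Delta_nu \<nu>" using p(1) unfolding spMS by (simp add: mem_Times_iff)
      have "\<bar>D p\<bar> \<le> \<bar>v c a (fst p) (snd p)\<bar> + \<bar>v c a' (fst p) (snd p)\<bar>"
        unfolding D_def by (rule abs_triangle_ineq4)
      also have "\<dots> \<le> B1 + B2" by (rule add_mono[OF B1[OF sp] B2[OF sp]])
      finally show "norm y \<le> B1 + B2" using p(2) by simp
    qed
    have Dmono: "\<forall>x\<in>space (MS \<nu>). \<forall>y\<in>space (MS \<nu>). sm_ge x y \<longrightarrow> D y \<le> D x"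
    proof (intro ballI impI)
      fix x y :: "'s \<times> ('c \<times> 'a) measure" assume x: "x \<in> space (MS \<nu>)" and y: "y \<in> space (MS \<nu>)" and xy: "sm_ge x y"
      have xD: "snd x \<in> Delta_nu \<nu>" using x unfolding spMS by (simp add: mem_Times_iff)
      have yD: "snd y \<in> Delta_nu \<nu>" using y unfolding spMS by (simp add: mem_Times_iff)
      have eq: "fst x = fst y" and sg: "stoch_ge borel ca_ge (snd x) (snd y)" using xy unfolding sm_ge_def by auto
      have "v c a (fst x) (snd y) - v c a' (fst x) (snd y) \<le> v c a (fst x) (snd x) - v c a' (fst x) (snd x)"
        by (rule v_incdiff[OF aa xD yD sg])
      then show "D y \<le> D x" unfolding D_def using eq by simp
    qed
    have "(\<integral>p. D p \<partial>\<kappa>') \<le> (\<integral>p. D p \<partial>\<kappa>)"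
      using st Dm Db Dmono unfolding stoch_ge_def by blast
    moreover have "(\<integral>p. D p \<partial>q) = Vint v c a q - Vint v c a' q" if "q \<in> prob_measures (MS \<nu>)" for q :: "('s \<times> ('c \<times> 'a) measure) measure"
      unfolding D_def Vint_def by (rule Bochner_Integration.integral_diff) (rule integ[OF that])+
    ultimately show "Vint v c a \<kappa>' - Vint v c a' \<kappa>' \<le> Vint v c a \<kappa> - Vint v c a' \<kappa>"
      using k k' by simp
  qed
qed

end
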